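(* For every $n\in\mathbb{N}$ and every $u\in\mathbb{N}_0$ there exists a spidernet with data $(2n,\,n+1+u,\,n)$ if and only if $u\le 2n-1$.
   Context: A rooted graph is $(V,A,o)$ with $V$ countable, $o\in V$, $A:V\times V\to\{0,1\}$ symmetric with $A_{xx}=0$; $x\sim y$ iff $A_{xy}=1$. For a connected rooted graph let $d(x,y)$ be the graph distance and, for $\varepsilon\in\{-1,0,1\}$, $\omega_\varepsilon(x)=|\{y\in V: y\sim x,\ d(o,y)=d(o,x)+\varepsilon\}|$. For $a\in\mathbb{N}$, $b\in\mathbb{N}\setminus\{1\}$, $c\in\mathbb{N}$ with $c\le b-1$, a spidernet with data $(a,b,c)$ is a connected rooted graph with $\omega_{+1}(o)=a$, $\omega_{-1}(o)=\omega_0(o)=0$, and $\omega_{+1}(x)=c$, $\omega_{-1}(x)=1$, $\omega_0(x)=b-1-c$ for all $x\in V\setminus\{o\}$. *)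

theory Defs
  imports "HOL-Library.Countable_Set"
begin

text \<open>A rooted graph (V, A, r): adjacency A is a symmetric irreflexive relation,
  assumed to vanish outside V \<times> V (A encodes the 0/1 matrix: A x y iff A_xy = 1).\<close>

definition rooted_graph :: "'v set \<Rightarrow> ('v \<Rightarrow> 'v \<Rightarrow> bool) \<Rightarrow> 'v \<Rightarrow> bool" where
  "rooted_graph V A r \<longleftrightarrow> countable V \<and> r \<in> V \<and>
     (\<forall>x y. A x y \<longrightarrow> x \<in> V \<and> y \<in> V) \<and>
     (\<forall>x y. A x y = A y x) \<and> (\<forall>x. \<not> A x x)"

definition walk_betw :: "('v \<Rightarrow> 'v \<Rightarrow> bool) \<Rightarrow> 'v \<Rightarrow> 'v list \<Rightarrow> 'v \<Rightarrow> bool" where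
  "walk_betw A x xs y \<longleftrightarrow> xs \<noteq> [] \<and> hd xs = x \<and> last xs = y \<and>
     (\<forall>i. Suc i < length xs \<longrightarrow> A (xs ! i) (xs ! Suc i))"

definition connected_graph :: "'v set \<Rightarrow> ('v \<Rightarrow> 'v \<Rightarrow> bool) \<Rightarrow> bool" where
  "connected_graph V A \<longleftrightarrow> (\<forall>x\<in>V. \<forall>y\<in>V. \<exists>xs. walk_betw A x xs y)"

definition gdist :: "('v \<Rightarrow> 'v \<Rightarrow> bool) \<Rightarrow> 'v \<Rightarrow> 'v \<Rightarrow> nat" where
  "gdist A x y = (LEAST n. \<exists>xs. walk_betw A x xs y \<and> length xs = Suc n)"

text \<open>omega_eps(x) as a set of neighbours; its size is the paper's omega_eps(x).\<close>
definition omega_set :: "'v set \<Rightarrow> ('v \<Rightarrow> 'v \<Rightarrow> bool) \<Rightarrow> 'v \<Rightarrow> int \<Rightarrow> 'v \<Rightarrow> 'v set" where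
  "omega_set V A r e x = {y \<in> V. A y x \<and> int (gdist A r y) = int (gdist A r x) + e}"

definition has_card :: "'a set \<Rightarrow> nat \<Rightarrow> bool" where
  "has_card S k \<longleftrightarrow> finite S \<and> card S = k"

definition spidernet :: "'v set \<Rightarrow> ('v \<Rightarrow> 'v \<Rightarrow> bool) \<Rightarrow> 'v \<Rightarrow> nat \<Rightarrow> nat \<Rightarrow> nat \<Rightarrow> bool" where
  "spidernet V A r a b c \<longleftrightarrow>
     1 \<le> a \<and> 2 \<le> b \<and> 1 \<le> c \<and> c \<le> b - 1 \<and>
     rooted_graph V A r \<and> connected_graph V A \<and>
     has_card (omega_set V A r 1 r) a \<and>
     has_card (omega_set V A r (-1) r) 0 \<and>
     has_card (omega_set V A r 0 r) 0 \<and>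
     (\<forall>x \<in> V - {r}.
        has_card (omega_set V A r 1 x) c \<and>
        has_card (omega_set V A r (-1) x) 1 \<and>
        has_card (omega_set V A r 0 x) (b - 1 - c))"

end

theory Submission
  imports Defs "HOL-Library.Nat_Bijection"
begin

lemma walk_snoc: "walk_betw A x xs y \<Longrightarrow> A y z \<Longrightarrow> walk_betw A x (xs @ [z]) z"
  unfolding walk_betw_def
proof (intro conjI allI impI)
  fix i assume h: "xs \<noteq> [] \<and> hd xs = x \<and> last xs = y \<and> (\<forall>i. Suc i < length xs \<longrightarrow> A (xs ! i) (xs ! Suc i))"
    and a: "A y z" and i: "Suc i < length (xs @ [z])"
  show "A ((xs @ [z]) ! i) ((xs @ [z]) ! Suc i)"
  proof (cases "Suc i < length xs")
    case True then show ?thesis using h by (simp add: nth_append)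
  next
    case False
    then have "i = length xs - 1" using i by simp
    moreover have "xs ! (length xs - 1) = y" using h last_conv_nth[of xs] by simp
    moreover have "length xs - 1 < length xs" using h by simp
    ultimately show ?thesis using h a by (simp add: nth_append)
  qed
qed auto

lemma walk_cons: "A x y \<Longrightarrow> walk_betw A y ys z \<Longrightarrow> walk_betw A x (x # ys) z"
  unfolding walk_betw_def
proof (intro conjI allI impI)
  fix i assume h: "ys \<noteq> [] \<and> hd ys = y \<and> last ys = z \<and> (\<forall>i. Suc i < length ys \<longrightarrow> A (ys ! i) (ys ! Suc i))"
    and a: "A x y" and i: "Suc i < length (x # ys)"
  show "A ((x # ys) ! i) ((x # ys) ! Suc i)"
  proof (cases i)
    case 0
    have "ys ! 0 = y" using h by (simp add: hd_conv_nth[symmetric])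
    then show ?thesis using a 0 by simp
  next
    case (Suc j) then show ?thesis using h i by simp
  qed
qed auto

lemma level_dist:
  fixes A :: "'v \<Rightarrow> 'v \<Rightarrow> bool" and lv :: "'v \<Rightarrow> nat"
  assumes AV: "\<And>x y. A x y \<Longrightarrow> x \<in> V \<and> y \<in> V" and sym: "\<And>x y. A x y = A y x"
    and rV: "r \<in> V" and lr: "lv r = 0"
    and step: "\<And>x y. A x y \<Longrightarrow> lv y \<le> Suc (lv x)"
    and par: "\<And>x. x \<in> V \<Longrightarrow> x \<noteq> r \<Longrightarrow> \<exists>y. A y x \<and> lv x = Suc (lv y)"
  shows "connected_graph V A" and "\<And>x. x \<in> V \<Longrightarrow> gdist A r x = lv x"
proof -
  have toroot: "\<forall>x\<in>V. lv x = k \<longrightarrow> (\<exists>xs. walk_betw A x xs r)" for k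
  proof (induction k)
    case 0
    show ?case
    proof (intro ballI impI)
      fix x assume "x \<in> V" "lv x = 0"
      then have "x = r" using par by fastforce
      then show "\<exists>xs. walk_betw A x xs r" by (rule_tac x="[r]" in exI) (simp add: walk_betw_def)
    qed
  next
    case (Suc k)
    show ?case
    proof (intro ballI impI)
      fix x assume x: "x \<in> V" "lv x = Suc k"
      then have "x \<noteq> r" using lr by auto
      then obtain y where y: "A y x" "lv x = Suc (lv y)" using par x by blast
      then have "y \<in> V" "lv y = k" using AV x by auto
      then obtain ys where "walk_betw A y ys r" using Suc by blast
      then have "walk_betw A x (x # ys) r" using walk_cons[of A x y ys r] y sym by simp
      then show "\<exists>xs. walk_betw A x xs r" by blast
    qed
  qed
  have froms: "\<forall>y\<in>V. lv y = k \<longrightarrow> (\<exists>ys. walk_betw A s ys y \<and> length ys = L + lv y)"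
    if w0: "walk_betw A s xs0 r" "length xs0 = L" for k s xs0 L
  proof (induction k)
    case 0
    show ?case
    proof (intro ballI impI)
      fix x assume "x \<in> V" "lv x = 0"
      then have "x = r" using par by fastforce
      then show "\<exists>ys. walk_betw A s ys x \<and> length ys = L + lv x" using w0 lr by auto
    qed
  next
    case (Suc k)
    show ?case
    proof (intro ballI impI)
      fix x assume x: "x \<in> V" "lv x = Suc k"
      then have "x \<noteq> r" using lr by auto
      then obtain y where y: "A y x" "lv x = Suc (lv y)" using par x by blast
      then have "y \<in> V" "lv y = k" using AV x by auto
      then obtain ys where "walk_betw A s ys y" "length ys = L + lv y" using Suc by blast
      then have "walk_betw A s (ys @ [x]) x \<and> length (ys @ [x]) = L + lv x" using walk_snoc y by fastforce
      then show "\<exists>ys. walk_betw A s ys x \<and> length ys = L + lv x" by blast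
    qed
  qed
  show "connected_graph V A"
    unfolding connected_graph_def
  proof (intro ballI)
    fix x y assume "x \<in> V" "y \<in> V"
    then obtain xs where "walk_betw A x xs r" using toroot by blast
    then show "\<exists>xs. walk_betw A x xs y" using froms[OF _ refl] \<open>y \<in> V\<close> by blast
  qed
  have lower: "lv x < length xs" if w: "walk_betw A r xs x" for x xs
  proof -
    have "\<forall>i. i < length xs \<longrightarrow> lv (xs ! i) \<le> i" 
    proof
      fix i show "i < length xs \<longrightarrow> lv (xs ! i) \<le> i"
      proof (induction i)
        case 0 then show ?case using w lr by (auto simp: walk_betw_def hd_conv_nth)
      next
        case (Suc i) then show ?case using w step[of "xs ! i" "xs ! Suc i"] by (auto simp: walk_betw_def)
      qed
    qed
    moreover have "x = xs ! (length xs - 1)" "xs \<noteq> []" using w by (auto simp: walk_betw_def last_conv_nth)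
    ultimately show ?thesis by (metis One_nat_def Suc_pred le_imp_less_Suc length_greater_0_conv lessI diff_Suc_less)
  qed
  have w1: "walk_betw A r [r] r" by (simp add: walk_betw_def)
  show "gdist A r x = lv x" if x: "x \<in> V" for x
    unfolding gdist_def
  proof (rule Least_equality)
    have "\<exists>ys. walk_betw A r ys x \<and> length ys = 1 + lv x" using froms[OF w1 refl] x by auto
    then show "\<exists>xs. walk_betw A r xs x \<and> length xs = Suc (lv x)" by simp
  next
    fix m assume "\<exists>xs. walk_betw A r xs x \<and> length xs = Suc m"
    then show "lv x \<le> m" using lower by fastforce
  qed
qed


lemma count_set:
  fixes p u :: nat
  assumes "u div 2 < p"
  shows "card {s::int. 0 \<le> s \<and> s < 2 * int p \<and> \<bar>s - int p\<bar> \<le> int (u div 2) \<and> (even u \<longrightarrow> s \<noteq> int p)} = u"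
proof -
  define t where "t = u div 2"
  have eq: "{s::int. 0 \<le> s \<and> s < 2 * int p \<and> \<bar>s - int p\<bar> \<le> int t \<and> (even u \<longrightarrow> s \<noteq> int p)}
     = {int p - int t .. int p + int t} - (if even u then {int p} else {})"
    using assms unfolding t_def by auto
  show ?thesis
  proof (cases "even u")
    case True
    then have "card ({int p - int t .. int p + int t} - {int p}) = 2 * t"
      by (simp add: card_Diff_singleton)
    then show ?thesis using eq True unfolding t_def by auto
  next
    case False
    have "2 * t + 1 = u" unfolding t_def using False odd_two_times_div_two_succ by blast
    moreover have "nat (2 * int t + 1) = 2 * t + 1" by simp
    ultimately have "card {int p - int t .. int p + int t} = u" by simp
    then show ?thesis using eq False unfolding t_def by auto
  qed
qed

lemma card_shift:
  fixes m i :: nat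
  assumes "0 < m"
  shows "card {j::nat. j < m \<and> P ((int j - int i) mod int m)} = card {s::int. 0 \<le> s \<and> s < int m \<and> P s}"
proof (rule bij_betw_same_card[of "\<lambda>j. (int j - int i) mod int m"])
  show "bij_betw (\<lambda>j. (int j - int i) mod int m) {j. j < m \<and> P ((int j - int i) mod int m)}
     {s. 0 \<le> s \<and> s < int m \<and> P s}"
    unfolding bij_betw_def
  proof
    show "inj_on (\<lambda>j. (int j - int i) mod int m) {j. j < m \<and> P ((int j - int i) mod int m)}"
    proof (rule inj_onI)
      fix a b assume a: "a \<in> {j. j < m \<and> P ((int j - int i) mod int m)}"
        and b: "b \<in> {j. j < m \<and> P ((int j - int i) mod int m)}"
        and e: "(int a - int i) mod int m = (int b - int i) mod int m"
      have "int a mod int m = int b mod int m"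
        using e by (metis add.commute diff_add_cancel mod_add_left_eq)
      then show "a = b" using a b by simp
    qed
  next
    show "(\<lambda>j. (int j - int i) mod int m) ` {j. j < m \<and> P ((int j - int i) mod int m)} =
      {s. 0 \<le> s \<and> s < int m \<and> P s}"
    proof
      show "(\<lambda>j. (int j - int i) mod int m) ` {j. j < m \<and> P ((int j - int i) mod int m)}
        \<subseteq> {s. 0 \<le> s \<and> s < int m \<and> P s}" using assms by auto
    next
      show "{s. 0 \<le> s \<and> s < int m \<and> P s} \<subseteq> (\<lambda>j. (int j - int i) mod int m) ` {j. j < m \<and> P ((int j - int i) mod int m)}"
      proof
        fix s assume s: "s \<in> {s. 0 \<le> s \<and> s < int m \<and> P s}"
        define j where "j = nat ((s + int i) mod int m)"
        have j1: "int j = (s + int i) mod int m" using assms unfolding j_def by simp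
        have j2: "j < m" using assms j1 by (metis nat_int of_nat_0_less_iff pos_mod_bound zless_nat_conj)
        have "(int j - int i) mod int m = s" using s j1
          by (metis add_diff_cancel_right' mod_diff_left_eq mod_pos_pos_trivial mem_Collect_eq)
        then show "s \<in> (\<lambda>j. (int j - int i) mod int m) ` {j. j < m \<and> P ((int j - int i) mod int m)}"
          using j2 s by (auto intro!: image_eqI[where x=j])
      qed
    qed
  qed
qed

lemma neg_mod_sym:
  fixes x :: int and p :: int
  assumes "0 < p"
  shows "\<bar>(- x) mod (2*p) - p\<bar> = \<bar>x mod (2*p) - p\<bar> \<and> ((- x) mod (2*p) = p \<longleftrightarrow> x mod (2*p) = p)"
  using assms by (auto simp: zmod_zminus1_eq_if)


definition lvc :: "nat \<Rightarrow> nat" where "lvc v = fst (prod_decode v)"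
definition ixc :: "nat \<Rightarrow> nat" where "ixc v = snd (prod_decode v)"
definition szf :: "nat \<Rightarrow> nat \<Rightarrow> nat" where "szf n k = (if k = 0 then 1 else 2 * n ^ k)"
definition VV :: "nat \<Rightarrow> nat set" where "VV n = {v. ixc v < szf n (lvc v)}"
definition pe :: "nat \<Rightarrow> nat \<Rightarrow> nat \<Rightarrow> bool" where
  "pe n v w \<longleftrightarrow> lvc w = Suc (lvc v) \<and> ixc v = (if lvc v = 0 then 0 else ixc w div n)"
definition lc :: "nat \<Rightarrow> nat \<Rightarrow> nat \<Rightarrow> nat \<Rightarrow> nat \<Rightarrow> bool" where
  "lc n u k i j \<longleftrightarrow> (let s = (int j - int i) mod int (2 * n ^ k) in
     \<bar>s - int (n ^ k)\<bar> \<le> int (u div 2) \<and> (even u \<longrightarrow> s \<noteq> int (n ^ k)))"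
definition lev :: "nat \<Rightarrow> nat \<Rightarrow> nat \<Rightarrow> nat \<Rightarrow> bool" where
  "lev n u v w \<longleftrightarrow> lvc v = lvc w \<and> 1 \<le> lvc v \<and> lc n u (lvc v) (ixc v) (ixc w)"
definition AA :: "nat \<Rightarrow> nat \<Rightarrow> nat \<Rightarrow> nat \<Rightarrow> bool" where
  "AA n u v w \<longleftrightarrow> v \<in> VV n \<and> w \<in> VV n \<and> (pe n v w \<or> pe n w v \<or> lev n u v w)"
definition parf :: "nat \<Rightarrow> nat \<Rightarrow> nat" where
  "parf n x = prod_encode (lvc x - 1, if lvc x - 1 = 0 then 0 else ixc x div n)"

lemma lvc_enc[simp]: "lvc (prod_encode (k, i)) = k" by (simp add: lvc_def)
lemma ixc_enc[simp]: "ixc (prod_encode (k, i)) = i" by (simp add: ixc_def)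
lemma enc_dec: "prod_encode (lvc v, ixc v) = v" by (simp add: lvc_def ixc_def)
lemma enc00[simp]: "prod_encode (0, 0) = 0" by (simp add: prod_encode_def)
lemma lvc0[simp]: "lvc 0 = 0" using lvc_enc[of 0 0] by simp
lemma ixc0[simp]: "ixc 0 = 0" using ixc_enc[of 0 0] by simp

lemma img_enc: "y \<in> (\<lambda>j. prod_encode (k, j)) ` S \<longleftrightarrow> lvc y = k \<and> ixc y \<in> S"
proof
  assume "lvc y = k \<and> ixc y \<in> S"
  then show "y \<in> (\<lambda>j. prod_encode (k, j)) ` S" using enc_dec[of y] by (auto intro!: image_eqI[where x="ixc y"])
qed auto

lemma card_img_enc: "card ((\<lambda>j. prod_encode (k, j)) ` S) = card S"
  by (rule card_image) (auto intro: inj_onI)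

lemma finite_img_enc: "finite S \<Longrightarrow> finite ((\<lambda>j. prod_encode (k, j)) ` S)"
  by simp

lemma lc_sym: assumes "1 \<le> n" shows "lc n u k i j = lc n u k j i"
proof -
  have p: "0 < int (n ^ k)" using assms by simp
  have e: "int i - int j = - (int j - int i)" by simp
  have m: "int (2 * n ^ k) = 2 * int (n ^ k)" by simp
  show ?thesis unfolding lc_def Let_def m e using neg_mod_sym[OF p, of "int j - int i"] by simp
qed

lemma ud: "1 \<le> (n::nat) \<Longrightarrow> u \<le> 2 * n - 1 \<Longrightarrow> u div 2 < n" by linarith

lemma npow: "1 \<le> (n::nat) \<Longrightarrow> 1 \<le> k \<Longrightarrow> n \<le> n ^ k"
  using power_increasing[of 1 k n] by simp

lemma lc_irr: assumes "1 \<le> n" "u \<le> 2 * n - 1" "1 \<le> k" shows "\<not> lc n u k i i"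
proof -
  have "u div 2 < n ^ k" using ud[OF assms(1,2)] npow[OF assms(1,3)] by linarith
  then show ?thesis unfolding lc_def Let_def by simp
qed

lemma lc_count: assumes "1 \<le> n" "u \<le> 2 * n - 1" "1 \<le> k"
  shows "card {j. j < 2 * n ^ k \<and> lc n u k j i} = u"
proof -
  define P where "P s = (\<bar>s - int (n ^ k)\<bar> \<le> int (u div 2) \<and> (even u \<longrightarrow> s \<noteq> int (n ^ k)))" for s
  have "{j. j < 2 * n ^ k \<and> lc n u k j i} = {j. j < 2 * n ^ k \<and> P ((int j - int i) mod int (2 * n ^ k))}"
  proof (rule Collect_cong)
    fix j
    have "lc n u k j i = lc n u k i j" using lc_sym[OF assms(1)] by blast
    then show "(j < 2 * n ^ k \<and> lc n u k j i) = (j < 2 * n ^ k \<and> P ((int j - int i) mod int (2 * n ^ k)))"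
      unfolding lc_def P_def Let_def by simp
  qed
  also have "card \<dots> = card {s::int. 0 \<le> s \<and> s < int (2 * n ^ k) \<and> P s}"
    by (rule card_shift) (use assms in simp)
  also have "{s::int. 0 \<le> s \<and> s < int (2 * n ^ k) \<and> P s} =
     {s::int. 0 \<le> s \<and> s < 2 * int (n ^ k) \<and> \<bar>s - int (n ^ k)\<bar> \<le> int (u div 2) \<and> (even u \<longrightarrow> s \<noteq> int (n ^ k))}"
    unfolding P_def by simp
  also have "card \<dots> = u"
    by (rule count_set) (use ud[OF assms(1,2)] npow[OF assms(1,3)] in linarith)
  finally show ?thesis .
qed

lemma divrange: fixes n i j k :: nat assumes "0 < n"
  shows "(j < 2 * n ^ Suc k \<and> i = j div n) \<longleftrightarrow> (i < 2 * n ^ k \<and> n * i \<le> j \<and> j < n * i + n)"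
proof
  assume h: "j < 2 * n ^ Suc k \<and> i = j div n"
  have "j < (2 * n ^ k) * n" using h by (simp add: mult.commute mult.left_commute)
  then have "i < 2 * n ^ k" using h less_mult_imp_div_less by blast
  moreover have e: "n * i + j mod n = j" using h mult_div_mod_eq[of n j] by simp
  moreover have "j mod n < n" using assms by simp
  ultimately show "i < 2 * n ^ k \<and> n * i \<le> j \<and> j < n * i + n" by linarith
next
  assume h: "i < 2 * n ^ k \<and> n * i \<le> j \<and> j < n * i + n"
  then have "i + 1 \<le> 2 * n ^ k" by simp
  then have "n * (i + 1) \<le> n * (2 * n ^ k)" by (rule mult_le_mono2)
  then have "j < 2 * n ^ Suc k" using h by (simp add: algebra_simps)
  moreover have "j div n = i" using h by (intro div_nat_eqI) auto
  ultimately show "j < 2 * n ^ Suc k \<and> i = j div n" by simp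
qed


lemma AA_sym: "1 \<le> n \<Longrightarrow> AA n u x y = AA n u y x"
  unfolding AA_def lev_def using lc_sym[of n u "lvc x" "ixc x" "ixc y"] by auto

lemma AA_irr: "1 \<le> n \<Longrightarrow> u \<le> 2 * n - 1 \<Longrightarrow> \<not> AA n u x x"
  unfolding AA_def lev_def pe_def using lc_irr[of n u] by auto

lemma AA_step: "AA n u x y \<Longrightarrow> lvc y \<le> Suc (lvc x)"
  unfolding AA_def lev_def pe_def by auto

lemma parf_props:
  assumes "1 \<le> n" "x \<in> VV n" "1 \<le> lvc x"
  shows "parf n x \<in> VV n" "pe n (parf n x) x"
proof -
  show "pe n (parf n x) x" unfolding pe_def parf_def using assms(3) by simp
  show "parf n x \<in> VV n"
  proof (cases "lvc x - 1 = 0")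
    case True then show ?thesis by (simp add: parf_def VV_def szf_def)
  next
    case False
    have "ixc x < 2 * n ^ lvc x" using assms(2,3) by (simp add: VV_def szf_def)
    also have "2 * n ^ lvc x = (2 * n ^ (lvc x - 1)) * n" using assms(3)
      by (cases "lvc x") (auto simp: mult.commute mult.left_commute)
    finally have "ixc x div n < 2 * n ^ (lvc x - 1)" by (rule less_mult_imp_div_less)
    then show ?thesis using False by (simp add: parf_def VV_def szf_def)
  qed
qed

lemma pe_unique: "pe n y x \<Longrightarrow> y = parf n x"
  unfolding pe_def parf_def using enc_dec[of y] by auto

lemma AA_par:
  assumes "1 \<le> n" "x \<in> VV n" "x \<noteq> 0"
  shows "\<exists>y. AA n u y x \<and> lvc x = Suc (lvc y)"
proof -
  have "lvc x \<noteq> 0"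
  proof
    assume "lvc x = 0"
    then have "ixc x = 0" using assms(2) by (simp add: VV_def szf_def)
    then show False using \<open>lvc x = 0\<close> enc_dec[of x] assms(3) by simp
  qed
  then have l: "1 \<le> lvc x" by simp
  show ?thesis using parf_props[OF assms(1,2) l] assms(2) l
    by (intro exI[of _ "parf n x"]) (auto simp: AA_def pe_def)
qed

lemma suff:
  assumes n: "1 \<le> n" and u: "u \<le> 2 * n - 1"
  shows "spidernet (VV n) (AA n u) 0 (2 * n) (n + 1 + u) n"
proof -
  let ?V = "VV n" and ?A = "AA n u"
  have AV: "\<And>x y. ?A x y \<Longrightarrow> x \<in> ?V \<and> y \<in> ?V" by (simp add: AA_def)
  have sym: "\<And>x y. ?A x y = ?A y x" using AA_sym[OF n] by blast
  have rV: "0 \<in> ?V" by (simp add: VV_def szf_def)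
  have par: "\<And>x. x \<in> ?V \<Longrightarrow> x \<noteq> 0 \<Longrightarrow> \<exists>y. ?A y x \<and> lvc x = Suc (lvc y)"
    using AA_par[OF n] by blast
  have st: "\<And>x y. ?A x y \<Longrightarrow> lvc y \<le> Suc (lvc x)" using AA_step by blast
  have LD1: "connected_graph ?V ?A"
    apply (rule level_dist(1)[where A="?A" and V="?V" and r=0 and lv=lvc])
    subgoal using AV by blast
    subgoal using sym by blast
    subgoal using rV .
    subgoal by simp
    subgoal using st by blast
    subgoal using par by blast
    done
  have LD2: "gdist ?A 0 x = lvc x" if "x \<in> ?V" for x
    apply (rule level_dist(2)[where A="?A" and V="?V" and r=0 and lv=lvc])
    subgoal using AV by blast
    subgoal using sym by blast
    subgoal using rV .
    subgoal by simp
    subgoal using st by blast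
    subgoal using par by blast
    subgoal using that .
    done
  have om: "omega_set ?V ?A 0 e x = {y. ?A y x \<and> int (lvc y) = int (lvc x) + e}" if xv: "x \<in> ?V" for e x
  proof (rule set_eqI)
    fix y
    show "y \<in> omega_set ?V ?A 0 e x \<longleftrightarrow> y \<in> {y. ?A y x \<and> int (lvc y) = int (lvc x) + e}"
    proof (cases "?A y x")
      case True
      then have "y \<in> ?V" using AV by blast
      then show ?thesis using True LD2[OF xv] LD2[of y] unfolding omega_set_def by simp
    next
      case False then show ?thesis unfolding omega_set_def by simp
    qed
  qed
  have rg: "rooted_graph ?V ?A 0"
    unfolding rooted_graph_def using AV sym rV AA_irr[OF n u] by auto
  have r1: "omega_set ?V ?A 0 1 0 = (\<lambda>j. prod_encode (1, j)) ` {..<2 * n}"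
    unfolding om[OF rV] set_eq_iff img_enc
  proof (intro allI)
    fix y
    have "?A y 0 \<and> int (lvc y) = int (lvc 0) + 1 \<longleftrightarrow> y \<in> ?V \<and> pe n 0 y \<and> lvc y = 1"
      using rV unfolding AA_def lev_def pe_def by auto
    also have "\<dots> \<longleftrightarrow> lvc y = 1 \<and> ixc y \<in> {..<2 * n}"
      unfolding VV_def szf_def pe_def by auto
    finally show "(y \<in> {y. ?A y 0 \<and> int (lvc y) = int (lvc 0) + 1}) = (lvc y = 1 \<and> ixc y \<in> {..<2 * n})"
      by simp
  qed
  have r2: "omega_set ?V ?A 0 (-1) 0 = {}" unfolding om[OF rV] by auto
  have r3: "omega_set ?V ?A 0 0 0 = {}" unfolding om[OF rV]
    by (auto simp: AA_def pe_def lev_def)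
  have nonroot: "has_card (omega_set ?V ?A 0 1 x) n \<and> has_card (omega_set ?V ?A 0 (-1) x) 1 \<and>
        has_card (omega_set ?V ?A 0 0 x) (n + 1 + u - 1 - n)" if x: "x \<in> ?V - {0}" for x
  proof -
    define k where "k = lvc x"
    define i where "i = ixc x"
    have k1: "1 \<le> k"
    proof (rule ccontr)
      assume "\<not> 1 \<le> k"
      then have "lvc x = 0" unfolding k_def by simp
      then have "ixc x = 0" using x by (simp add: VV_def szf_def)
      then show False using \<open>lvc x = 0\<close> enc_dec[of x] x by simp
    qed
    have xV: "x \<in> ?V" using x by simp
    have i: "i < 2 * n ^ k" using xV k1 unfolding i_def k_def by (simp add: VV_def szf_def)
    have c1: "omega_set ?V ?A 0 1 x = (\<lambda>j. prod_encode (Suc k, j)) ` {n * i..<n * i + n}"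
      unfolding om[OF xV] set_eq_iff img_enc
    proof (intro allI)
      fix y
      have "(?A y x \<and> int (lvc y) = int (lvc x) + 1) \<longleftrightarrow>
            (lvc y = Suc k \<and> y \<in> ?V \<and> pe n x y)"
        using xV unfolding AA_def lev_def pe_def k_def by auto
      also have "\<dots> \<longleftrightarrow> (lvc y = Suc k \<and> ixc y < 2 * n ^ Suc k \<and> i = ixc y div n)"
        using k1 unfolding VV_def szf_def pe_def k_def i_def by auto
      also have "\<dots> \<longleftrightarrow> (lvc y = Suc k \<and> ixc y \<in> {n * i..<n * i + n})"
        using divrange[of n "ixc y" k i] n i by auto
      finally show "(y \<in> {y. ?A y x \<and> int (lvc y) = int (lvc x) + 1}) = (lvc y = Suc k \<and> ixc y \<in> {n * i..<n * i + n})"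
        by simp
    qed
    have c2: "omega_set ?V ?A 0 (-1) x = {parf n x}"
      unfolding om[OF xV] set_eq_iff
    proof (intro allI)
      fix y
      show "(y \<in> {y. ?A y x \<and> int (lvc y) = int (lvc x) + - 1}) = (y \<in> {parf n x})"
      proof
        assume "y \<in> {y. ?A y x \<and> int (lvc y) = int (lvc x) + - 1}"
        then have "pe n y x" by (auto simp: AA_def pe_def lev_def)
        then show "y \<in> {parf n x}" using pe_unique by simp
      next
        assume "y \<in> {parf n x}"
        then show "y \<in> {y. ?A y x \<and> int (lvc y) = int (lvc x) + - 1}"
          using parf_props[OF n xV] k1 xV unfolding k_def
          by (auto simp: AA_def pe_def)
      qed
    qed
    have c3: "omega_set ?V ?A 0 0 x = (\<lambda>j. prod_encode (k, j)) ` {j. j < 2 * n ^ k \<and> lc n u k j i}"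
      unfolding om[OF xV] set_eq_iff img_enc
    proof (intro allI)
      fix y
      have e0: "int (lvc y) = int (lvc x) + 0 \<longleftrightarrow> lvc y = k" unfolding k_def by simp
      have np: "lvc y = k \<Longrightarrow> \<not> pe n y x \<and> \<not> pe n x y" unfolding pe_def k_def by simp
      have "(?A y x \<and> int (lvc y) = int (lvc x) + 0) \<longleftrightarrow> (lvc y = k \<and> y \<in> ?V \<and> lev n u y x)"
        unfolding e0 using np xV unfolding AA_def by blast
      also have "\<dots> \<longleftrightarrow> (lvc y = k \<and> ixc y \<in> {j. j < 2 * n ^ k \<and> lc n u k j i})"
      proof (cases "lvc y = k")
        case True
        have "y \<in> ?V \<longleftrightarrow> ixc y < 2 * n ^ k" using True k1 unfolding VV_def szf_def by simp
        moreover have "lev n u y x \<longleftrightarrow> lc n u k (ixc y) i" using True k1 unfolding lev_def k_def i_def by simp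
        ultimately show ?thesis using True by simp
      qed simp
      finally show "(y \<in> {y. ?A y x \<and> int (lvc y) = int (lvc x) + 0}) = (lvc y = k \<and> ixc y \<in> {j. j < 2 * n ^ k \<and> lc n u k j i})"
        by simp
    qed
    have "card {j. j < 2 * n ^ k \<and> lc n u k j i} = u" using lc_count[OF n u k1] .
    moreover have "finite {j. j < 2 * n ^ k \<and> lc n u k j i}" by simp
    ultimately show ?thesis unfolding has_card_def c1 c2 c3 card_img_enc by simp
  qed
  show ?thesis unfolding spidernet_def
  proof (intro conjI)
    show "has_card (omega_set ?V ?A 0 1 0) (2 * n)"
      unfolding r1 has_card_def card_img_enc by simp
    show "has_card (omega_set ?V ?A 0 (-1) 0) 0" unfolding r2 has_card_def by simp
    show "has_card (omega_set ?V ?A 0 0 0) 0" unfolding r3 has_card_def by simp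
    show "\<forall>x\<in>?V - {0}. has_card (omega_set ?V ?A 0 1 x) n \<and> has_card (omega_set ?V ?A 0 (-1) x) 1 \<and>
        has_card (omega_set ?V ?A 0 0 x) (n + 1 + u - 1 - n)" using nonroot by blast
  qed (use n rg LD1 in auto)
qed


lemma gdist_walk:
  assumes "\<exists>xs. walk_betw A r xs y"
  shows "\<exists>xs. walk_betw A r xs y \<and> length xs = Suc (gdist A r y)"
proof -
  from assms obtain xs where "walk_betw A r xs y" by blast
  moreover have "xs \<noteq> []" using calculation by (simp add: walk_betw_def)
  ultimately have "\<exists>m. \<exists>xs. walk_betw A r xs y \<and> length xs = Suc m"
    by (intro exI[of _ "length xs - 1"]) auto
  then show ?thesis unfolding gdist_def by (rule LeastI_ex)
qed

lemma nec:
  assumes sp: "spidernet V A r (2 * n) (n + 1 + u) n"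
  shows "u \<le> 2 * n - 1"
proof -
  have rg: "rooted_graph V A r" and conn: "connected_graph V A"
    and hc1: "has_card (omega_set V A r 1 r) (2 * n)"
    and hx: "\<forall>x\<in>V - {r}. has_card (omega_set V A r 0 x) (n + 1 + u - 1 - n)"
    and n1: "1 \<le> n"
    using sp unfolding spidernet_def by auto
  have rV: "r \<in> V" and AV: "\<And>x y. A x y \<Longrightarrow> x \<in> V \<and> y \<in> V"
    and sym: "\<And>x y. A x y = A y x" and irr: "\<And>x. \<not> A x x"
    using rg unfolding rooted_graph_def by auto
  have g0: "gdist A r r = 0" unfolding gdist_def
    by (rule Least_eq_0) (rule exI[of _ "[r]"], simp add: walk_betw_def)
  have fin: "finite (omega_set V A r 1 r)" and c1: "card (omega_set V A r 1 r) = 2 * n"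
    using hc1 unfolding has_card_def by auto
  then have "omega_set V A r 1 r \<noteq> {}" using n1 by auto
  then obtain x where x: "x \<in> omega_set V A r 1 r" by blast
  then have xV: "x \<in> V" and gx: "gdist A r x = 1" using g0 unfolding omega_set_def by auto
  then have "x \<noteq> r" using g0 by auto
  then have hx': "has_card (omega_set V A r 0 x) u" using hx xV by auto
  have sub: "omega_set V A r 0 x \<subseteq> omega_set V A r 1 r - {x}"
  proof
    fix y assume y: "y \<in> omega_set V A r 0 x"
    then have yV: "y \<in> V" and Ayx: "A y x" and gy: "gdist A r y = 1"
      using gx unfolding omega_set_def by auto
    have "y \<noteq> x" using Ayx irr by auto
    have "\<exists>xs. walk_betw A r xs y" using conn rV yV unfolding connected_graph_def by blast
    then obtain xs where w: "walk_betw A r xs y" "length xs = 2"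
      using gdist_walk[of A r y] gy by auto
    then have "xs ! 0 = r" "xs ! 1 = y" "A (xs ! 0) (xs ! 1)"
      unfolding walk_betw_def by (auto simp: hd_conv_nth last_conv_nth)
    then have "A y r" using sym by simp
    then show "y \<in> omega_set V A r 1 r - {x}" using yV gy g0 \<open>y \<noteq> x\<close> unfolding omega_set_def by simp
  qed
  have "u = card (omega_set V A r 0 x)" using hx' unfolding has_card_def by simp
  also have "\<dots> \<le> card (omega_set V A r 1 r - {x})" using sub fin by (intro card_mono) auto
  also have "\<dots> = 2 * n - 1" using c1 x fin by simp
  finally show ?thesis .
qed

theorem mainTheorem8:
  fixes n u :: nat
  assumes "1 \<le> n"
  shows "(\<exists>(V :: nat set) A r. spidernet V A r (2 * n) (n + 1 + u) n) \<longleftrightarrow> u \<le> 2 * n - 1"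
proof
  assume "\<exists>(V :: nat set) A r. spidernet V A r (2 * n) (n + 1 + u) n"
  then obtain V :: "nat set" and A r where "spidernet V A r (2 * n) (n + 1 + u) n" by blast
  then show "u \<le> 2 * n - 1" by (rule nec)
next
  assume "u \<le> 2 * n - 1"
  then show "\<exists>(V :: nat set) A r. spidernet V A r (2 * n) (n + 1 + u) n"
    using suff[OF assms] by blast
qed

end
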